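(* Let $m>2$ be an integer and let $q$ be a prime power with $(m-1)\mid(q-1)$ and $m\mid(q-1)$. Let $n=1+\frac{q-1}{m}$. Then $|C_m+C_n|\le q-1$. In particular, not every element of $\mathbb{F}_q$ is the sum of an $m$-potent and an $n$-potent.
   Context: For a prime power $q$ and an integer $k>1$, an element $a\in\mathbb{F}_q$ is called a $k$-potent if $a^k=a$, and $C_k$ denotes the set of all $k$-potents in $\mathbb{F}_q$. For sets $A,B\subseteq\mathbb{F}_q$, $A+B=\{a+b:a\in A,b\in B\}$. *)

theory Defs
  imports Main
begin

definition potents :: "nat \<Rightarrow> 'a::field set" where
  "potents k = {a. a ^ k = a}"

definition sumset :: "'a::plus set \<Rightarrow> 'a set \<Rightarrow> 'a set" where
  "sumset A B = {a + b | a b. a \<in> A \<and> b \<in> B}"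

end

theory Submission
  imports Defs "HOL-Computational_Algebra.Polynomial"
begin

lemma roots_bound:
  assumes "k \<ge> 1"
  shows "card {x::'a::field. x ^ k = 1} \<le> k"
proof -
  let ?p = "monom (1::'a) k + (- 1)"
  have deg: "degree ?p = k" using assms
    by (subst degree_add_eq_left) (auto simp: degree_monom_eq)
  have ne: "?p \<noteq> 0" using deg assms by auto
  have "{x::'a. x ^ k = 1} = {x. poly ?p x = 0}" by (simp add: poly_monom)
  then show ?thesis using card_poly_roots_bound[OF ne] deg by simp
qed

lemma pot_nonzero:
  assumes "(x::'a::field) ^ Suc j = x" "x \<noteq> 0"
  shows "x ^ j = 1"
proof -
  have "x * x ^ j = x * 1" using assms(1) by simp
  then show ?thesis using assms(2) by simp
qed

theorem mainTheorem6:
  fixes m n q :: nat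
  assumes "q = card (UNIV :: 'a::{field,finite} set)"
    and "m > 2"
    and "(m - 1) dvd (q - 1)"
    and "m dvd (q - 1)"
    and "n = 1 + (q - 1) div m"
  shows "card (sumset (potents m) (potents n) :: 'a set) \<le> q - 1
         \<and> sumset (potents m) (potents n) \<noteq> (UNIV :: 'a set)"
proof -
  define d where "d = (q - 1) div m"
  define k where "k = m - 1"
  have q2: "q \<ge> 2"
  proof -
    have "card {0::'a, 1} \<le> q" using assms(1) card_mono[of "UNIV::'a set" "{0,1}"] by simp
    then show ?thesis by simp
  qed
  have qd: "q - 1 = m * d" using assms(4) d_def by simp
  have d1: "d \<ge> 1" using qd q2 by (cases d) auto
  have k2: "k \<ge> 2" using assms(2) k_def by simp
  have mk: "m = Suc k" using k_def assms(2) by simp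
  have kd: "k dvd d"
  proof -
    have "k dvd m * d" using assms(3) qd k_def by simp
    moreover have "coprime k m" using mk by simp
    ultimately show ?thesis using coprime_dvd_mult_right_iff by blast
  qed
  have nd: "n = Suc d" using assms(5) d_def by simp
  define A where "A = {x::'a. x ^ k = 1}"
  define B where "B = {x::'a. x ^ d = 1}"
  have AB: "A \<subseteq> B"
  proof
    fix x assume "x \<in> A"
    then have "x ^ k = 1" by (simp add: A_def)
    moreover obtain t where "d = k * t" using kd by blast
    ultimately show "x \<in> B" by (simp add: B_def power_mult)
  qed
  have cA: "card A \<le> k" unfolding A_def using roots_bound[where 'a='a, of k] k2 by simp
  have cB: "card B \<le> d" unfolding B_def using roots_bound[where 'a='a, of d] d1 by simp
  have S_ne: "sumset (potents m) (potents n) \<noteq> (UNIV :: 'a set)"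
  proof
    assume S: "sumset (potents m) (potents n) = (UNIV :: 'a set)"
    define T where "T = {x::'a. x \<noteq> 0 \<and> x ^ d \<noteq> 1}"
    define f where "f = (\<lambda>(a::'a, b). a + b)"
    have TI: "T \<subseteq> f ` (A \<times> B)"
    proof
      fix x assume xT: "x \<in> T"
      have "x \<in> sumset (potents m) (potents n)" using S by simp
      then obtain a b where x: "x = a + b" and a: "a ^ m = a" and b: "b ^ n = b"
        by (auto simp: sumset_def potents_def)
      have xn: "x \<noteq> 0" "x ^ d \<noteq> 1" using xT T_def by auto
      show "x \<in> f ` (A \<times> B)"
      proof (cases "a = 0")
        case True
        then have "x = b" using x by simp
        then have "b ^ Suc d = b" "b \<noteq> 0" using b nd xn by auto
        then have "b ^ d = 1" by (rule pot_nonzero)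
        then show ?thesis using xn \<open>x = b\<close> by simp
      next
        case an: False
        have aA: "a \<in> A" using pot_nonzero[of a k] a mk an A_def by simp
        show ?thesis
        proof (cases "b = 0")
          case True
          then have "x = a" using x by simp
          have "a \<in> B" using aA AB by blast
          then have "a ^ d = 1" by (simp add: B_def)
          then show ?thesis using xn \<open>x = a\<close> by simp
        next
          case False
          have "b ^ d = 1" using pot_nonzero[of b d] b nd False by simp
          then have "b \<in> B" by (simp add: B_def)
          then show ?thesis using aA x f_def by (intro rev_image_eqI[of "(a, b)"]) auto
        qed
      qed
    qed
    have finAB: "finite (A \<times> B)" by simp
    have cAB: "card (A \<times> B) \<le> k * d"
      using cA cB by (simp add: card_cartesian_product mult_mono)
    have img: "card (f ` (A \<times> B)) < k * d"
    proof (cases "\<exists>z\<in>A. z \<noteq> 1")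
      case True
      then obtain z where z: "z \<in> A" "z \<noteq> 1" by blast
      have oneA: "(1::'a) \<in> A" by (simp add: A_def)
      have "f ` (A \<times> B) = f ` (A \<times> B - {(z, 1)})"
      proof (rule equalityI)
        show "f ` (A \<times> B) \<subseteq> f ` (A \<times> B - {(z, 1)})"
        proof
          fix y assume "y \<in> f ` (A \<times> B)"
          then obtain p where p: "p \<in> A \<times> B" "y = f p" by blast
          show "y \<in> f ` (A \<times> B - {(z, 1)})"
          proof (cases "p = (z, 1)")
            case True
            have "(1, z) \<in> A \<times> B - {(z, 1)}" using oneA z AB by auto
            moreover have "f (1, z) = y" using p True f_def by (simp add: add.commute)
            ultimately show ?thesis by (intro rev_image_eqI[of "(1, z)"]) auto
          next
            case False
            then show ?thesis using p by blast
          qed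
        qed
      qed auto
      also have "card \<dots> \<le> card (A \<times> B - {(z, 1)})" by (rule card_image_le) simp
      also have "\<dots> < card (A \<times> B)"
        using z oneA AB by (intro psubset_card_mono) auto
      finally show ?thesis using cAB by linarith
    next
      case False
      then have "A \<subseteq> {1}" by auto
      then have "card A \<le> card {1::'a}" by (intro card_mono) simp_all
      then have "card A \<le> 1" by simp
      then have "card (A \<times> B) \<le> 1 * d" using cB
        unfolding card_cartesian_product by (intro mult_mono) auto
      moreover have "1 * d < k * d" using k2 d1 by simp
      moreover have "card (f ` (A \<times> B)) \<le> card (A \<times> B)" by (rule card_image_le) simp
      ultimately show ?thesis by linarith
    qed
    have "T = UNIV - insert 0 B" using d1 by (auto simp: T_def B_def)
    then have "card T = q - card (insert 0 B)" using assms(1)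
      by (simp add: card_Diff_subset)
    also have "card (insert 0 B) = Suc (card B)"
    proof -
      have "(0::'a) \<notin> B" using d1 by (simp add: B_def power_0_left)
      then show ?thesis by (intro card_insert_disjoint) simp_all
    qed
    finally have "card T \<ge> q - 1 - d" using cB by simp
    moreover have "q - 1 - d = k * d" using qd mk by simp
    moreover have "card T \<le> card (f ` (A \<times> B))" using TI by (simp add: card_mono)
    ultimately show False using img by linarith
  qed
  have "card (sumset (potents m) (potents n) :: 'a set) < q"
    unfolding assms(1) by (rule psubset_card_mono) (use S_ne in auto)
  then show ?thesis using S_ne by simp
qed

end
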